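(* Let $X$ be a real reflexive Banach space, $T:X\rightrightarrows X^{\ast}$ maximally monotone, and $h\in\mathcal{H}(T)$. Then: (i) for every $x\in\mathrm{dom}(T)$ and every $\epsilon\ge0$, the set $\breve{T}_h(\epsilon,x)$ is convex; (ii) the graph of $\breve{T}_h$ is demi-closed: if $\{x_n\}\subset X$ converges strongly (resp. weakly) to $x$, $x_n^{\ast}\in\breve{T}_h(\epsilon_n,x_n)$ with $\{x_n^{\ast}\}$ converging weakly (resp. strongly) to $x^{\ast}$, and $\epsilon_n\to\epsilon\ge0$, then $x^{\ast}\in\breve{T}_h(\epsilon,x)$; in particular $\breve{T}_h(\epsilon,x)$ is weakly closed; (iii) $\breve{T}_h(0,x)=T(x)$ for every $x\in X$.
   Context: $X^{\ast}$ is the dual of $X$ with pairing $\langle\cdot,\cdot\rangle$; $\mathrm{dom}(T)=\{x:T(x)\neq\emptyset\}$. The dual of $X\times X^{\ast}$ is identified with $X^{\ast}\times X$ via $\langle (x,x^{\ast}),(y^{\ast},y)\rangle=\langle x,y^{\ast}\rangle+\langle y,x^{\ast}\rangle$. $\mathcal{H}(T)$ is the family of lower semicontinuous convex $h:X\times X^{\ast}\to\mathbb{R}\cup\{+\infty\}$ with $h(x,x^{\ast})\ge\langle x,x^{\ast}\rangle$ everywhere and equality whenever $x^{\ast}\in T(x)$. For $\eta\ge0$, $\partial_\eta h(z)$ is the set of $(y^{\ast},y)\in X^{\ast}\times X$ with $h(w,w^{\ast})\ge h(z)+\langle (w,w^{\ast})-z,(y^{\ast},y)\rangle-\eta$ for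 all $(w,w^{\ast})$ when $h(z)<\infty$, and $\emptyset$ otherwise. $\breve{T}_h:[0,\infty)\times X\rightrightarrows X^{\ast}$ is $\breve{T}_h(\epsilon,x):=\{x^{\ast}:(x^{\ast},x)\in\partial_{2\epsilon}h(x,x^{\ast})\}$. *)

theory Defs
  imports "HOL-Analysis.Analysis"
begin

text \<open>Dual space X* is modelled as the type of bounded linear functionals 'a \<Rightarrow>L real.
  The pairing is blinfun_apply.\<close>

definition reflexive_space :: "'a::real_normed_vector itself \<Rightarrow> bool" where
  "reflexive_space _ \<longleftrightarrow>
     (\<forall>\<phi> :: ('a \<Rightarrow>\<^sub>L real) \<Rightarrow>\<^sub>L real. \<exists>x::'a. \<forall>f. blinfun_apply \<phi> f = blinfun_apply f x)"

definition weak_conv :: "(nat \<Rightarrow> 'b::real_normed_vector) \<Rightarrow> 'b \<Rightarrow> bool" where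
  "weak_conv xs x \<longleftrightarrow> (\<forall>f :: 'b \<Rightarrow>\<^sub>L real. (\<lambda>n. blinfun_apply f (xs n)) \<longlonglongrightarrow> blinfun_apply f x)"

definition weakly_closed :: "'b::real_normed_vector set \<Rightarrow> bool" where
  "weakly_closed S \<longleftrightarrow>
     (\<forall>x. x \<notin> S \<longrightarrow> (\<exists>F :: ('b \<Rightarrow>\<^sub>L real) set. finite F \<and> (\<exists>e>0.
        \<forall>y. (\<forall>f\<in>F. \<bar>blinfun_apply f y - blinfun_apply f x\<bar> < e) \<longrightarrow> y \<notin> S)))"

definition dom_op :: "('a \<Rightarrow> 'b set) \<Rightarrow> 'a set" where
  "dom_op T = {x. T x \<noteq> {}}"

definition monotone_op :: "('a::real_normed_vector \<Rightarrow> ('a \<Rightarrow>\<^sub>L real) set) \<Rightarrow> bool" where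
  "monotone_op T \<longleftrightarrow> (\<forall>x y xs ys. xs \<in> T x \<longrightarrow> ys \<in> T y \<longrightarrow>
      blinfun_apply (xs - ys) (x - y) \<ge> 0)"

definition maximal_monotone :: "('a::real_normed_vector \<Rightarrow> ('a \<Rightarrow>\<^sub>L real) set) \<Rightarrow> bool" where
  "maximal_monotone T \<longleftrightarrow> monotone_op T \<and>
     (\<forall>S. monotone_op S \<longrightarrow> (\<forall>x. T x \<subseteq> S x) \<longrightarrow> S = T)"

definition ereal_convex :: "('b::real_vector \<Rightarrow> ereal) \<Rightarrow> bool" where
  "ereal_convex h \<longleftrightarrow> (\<forall>z w (t::real). 0 \<le> t \<longrightarrow> t \<le> 1 \<longrightarrow>
      h ((1 - t) *\<^sub>R z + t *\<^sub>R w) \<le> ereal (1 - t) * h z + ereal t * h w)"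

definition ereal_lsc :: "('b::topological_space \<Rightarrow> ereal) \<Rightarrow> bool" where
  "ereal_lsc h \<longleftrightarrow> (\<forall>c::real. closed {z. h z \<le> ereal c})"

definition HT :: "('a::real_normed_vector \<Rightarrow> ('a \<Rightarrow>\<^sub>L real) set)
    \<Rightarrow> ('a \<times> ('a \<Rightarrow>\<^sub>L real) \<Rightarrow> ereal) set" where
  "HT T = {h. (\<forall>z. h z \<noteq> -\<infinity>) \<and> ereal_lsc h \<and> ereal_convex h \<and>
      (\<forall>x xs. h (x, xs) \<ge> ereal (blinfun_apply xs x)) \<and>
      (\<forall>x xs. xs \<in> T x \<longrightarrow> h (x, xs) = ereal (blinfun_apply xs x))}"

text \<open>Pairing of X \<times> X* with its dual X* \<times> X.\<close>
definition pair_dual :: "'a::real_normed_vector \<times> ('a \<Rightarrow>\<^sub>L real) \<Rightarrow> ('a \<Rightarrow>\<^sub>L real) \<times> 'a \<Rightarrow> real" where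
  "pair_dual z p = blinfun_apply (fst p) (fst z) + blinfun_apply (snd z) (snd p)"

definition eps_subdiff :: "('a::real_normed_vector \<times> ('a \<Rightarrow>\<^sub>L real) \<Rightarrow> ereal) \<Rightarrow> real
    \<Rightarrow> 'a \<times> ('a \<Rightarrow>\<^sub>L real) \<Rightarrow> (('a \<Rightarrow>\<^sub>L real) \<times> 'a) set" where
  "eps_subdiff h \<eta> z = (if h z < \<infinity> then
      {p. \<forall>w. h w \<ge> h z + ereal (pair_dual (w - z) p) - ereal \<eta>} else {})"

definition Tbreve :: "('a::real_normed_vector \<times> ('a \<Rightarrow>\<^sub>L real) \<Rightarrow> ereal) \<Rightarrow> real \<Rightarrow> 'a
    \<Rightarrow> ('a \<Rightarrow>\<^sub>L real) set" where
  "Tbreve h \<epsilon> x = {xs. (xs, x) \<in> eps_subdiff h (2 * \<epsilon>) (x, xs)}"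

end

theory Submission
  imports Defs
begin

definition lsubG :: "('v::real_vector \<times> real) set \<Rightarrow> bool" where
  "lsubG G \<longleftrightarrow> (0,0) \<in> G \<and> (\<forall>x a y b. (x,a)\<in>G \<longrightarrow> (y,b)\<in>G \<longrightarrow> (x+y,a+b)\<in>G)
     \<and> (\<forall>x a c. (x,a)\<in>G \<longrightarrow> (c *\<^sub>R x, c*a)\<in>G)"

lemma HB_analytic:
  fixes p :: "'v::real_vector \<Rightarrow> real"
  assumes sub: "\<And>x y. p (x+y) \<le> p x + p y"
    and hom: "\<And>a x. a > 0 \<Longrightarrow> p (a *\<^sub>R x) = a * p x"
  shows "\<exists>f. (\<forall>x y. f (x+y) = f x + f y) \<and> (\<forall>c x. f (c *\<^sub>R x) = c * f x) \<and> (\<forall>x. f x \<le> p x) \<and> f x0 = p x0"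
proof -
  have p0: "p 0 = 0" using hom[of 2 0] by simp
  have pneg: "0 \<le> p x + p (-x)" for x using sub[of x "-x"] p0 by simp
  define A where "A = {G. lsubG G \<and> (\<forall>x a. (x,a)\<in>G \<longrightarrow> a \<le> p x) \<and> (x0, p x0) \<in> G}"
  define G0 where "G0 = {(t *\<^sub>R x0, t * p x0) | t. True}"
  have G0A: "G0 \<in> A"
  proof -
    have domin: "t * p x0 \<le> p (t *\<^sub>R x0)" for t
    proof (cases "t > 0")
      case True then show ?thesis using hom by simp
    next
      case False
      then have "0 \<le> -t" by simp
      have "p (t *\<^sub>R x0) = p ((-t) *\<^sub>R (-x0))" by simp
      moreover have "(-t) * (p x0 + p (-x0)) \<ge> 0" using mult_nonneg_nonneg[OF \<open>0 \<le> -t\<close> pneg[of x0]] .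
      moreover have "p ((-t) *\<^sub>R (-x0)) = (-t) * p (-x0)"
        using hom[of "-t" "-x0"] False p0 by (cases "t = 0") auto
      ultimately show ?thesis by (simp add: algebra_simps)
    qed
    have gm: "(t *\<^sub>R x0, t * p x0) \<in> G0" for t unfolding G0_def by blast
    have ls: "lsubG G0" unfolding lsubG_def
    proof (intro conjI allI impI)
      show "(0,0) \<in> G0" using gm[of 0] by simp
      fix x a y b assume "(x,a) \<in> G0" "(y,b) \<in> G0"
      then obtain t1 t2 where "x = t1 *\<^sub>R x0" "a = t1 * p x0" "y = t2 *\<^sub>R x0" "b = t2 * p x0"
        unfolding G0_def by blast
      then show "(x+y, a+b) \<in> G0" using gm[of "t1+t2"] by (simp add: algebra_simps)
    next
      fix x a c assume "(x,a) \<in> G0"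
      then obtain t1 where "x = t1 *\<^sub>R x0" "a = t1 * p x0" unfolding G0_def by blast
      then show "(c *\<^sub>R x, c*a) \<in> G0" using gm[of "c*t1"] by (simp add: algebra_simps)
    qed
    have dm: "a \<le> p x" if "(x,a) \<in> G0" for x a
      using that domin unfolding G0_def by blast
    show ?thesis unfolding A_def using ls dm gm[of 1] by simp
  qed
  have "\<exists>M\<in>A. \<forall>X\<in>A. M \<subseteq> X \<longrightarrow> X = M"
  proof (rule Zorn_Lemma2, intro ballI)
    fix C assume C: "C \<in> chains A"
    show "\<exists>U\<in>A. \<forall>X\<in>C. X \<subseteq> U"
    proof (cases "C = {}")
      case True then show ?thesis using G0A by blast
    next
      case False
      then obtain X0 where X0: "X0 \<in> C" by blast
      have CA: "C \<subseteq> A" using chainsD2[OF C] .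
      have "\<Union>C \<in> A" unfolding A_def lsubG_def
      proof (intro CollectI conjI allI impI)
        show "(0,0) \<in> \<Union>C" using X0 CA unfolding A_def lsubG_def by blast
        show "(x0, p x0) \<in> \<Union>C" using X0 CA unfolding A_def by blast
        fix x a assume "(x,a) \<in> \<Union>C"
        then obtain X where X: "X \<in> C" "(x,a) \<in> X" by blast
        then show "a \<le> p x" using CA unfolding A_def by blast
        fix c show "(c *\<^sub>R x, c*a) \<in> \<Union>C" using X CA unfolding A_def lsubG_def by blast
      next
        fix x a y b assume "(x,a) \<in> \<Union>C" "(y,b) \<in> \<Union>C"
        then obtain X Y where X: "X \<in> C" "(x,a) \<in> X" and Y: "Y \<in> C" "(y,b) \<in> Y" by blast
        have XA: "X \<in> A" and YA: "Y \<in> A" using X Y CA by auto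
        from chainsD[OF C X(1) Y(1)] show "(x+y, a+b) \<in> \<Union>C"
        proof
          assume "X \<subseteq> Y"
          then have "(x+y, a+b) \<in> Y" using YA X Y unfolding A_def lsubG_def by blast
          then show ?thesis using Y by blast
        next
          assume "Y \<subseteq> X"
          then have "(x+y, a+b) \<in> X" using XA X Y unfolding A_def lsubG_def by blast
          then show ?thesis using X by blast
        qed
      qed
      then show ?thesis by blast
    qed
  qed
  then obtain M where MA: "M \<in> A" and Mmax: "\<And>X. X \<in> A \<Longrightarrow> M \<subseteq> X \<Longrightarrow> X = M" by blast
  have Ml: "lsubG M" and Md: "\<And>x a. (x,a) \<in> M \<Longrightarrow> a \<le> p x" and Mx0: "(x0, p x0) \<in> M"
    using MA unfolding A_def by auto
  have Madd: "(x,a)\<in>M \<Longrightarrow> (y,b)\<in>M \<Longrightarrow> (x+y,a+b)\<in>M" for x a y b using Ml unfolding lsubG_def by blast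
  have Msc: "(x,a)\<in>M \<Longrightarrow> (c *\<^sub>R x, c*a)\<in>M" for x a c using Ml unfolding lsubG_def by blast
  have M0: "(0,0) \<in> M" using Ml unfolding lsubG_def by blast
  have uniq: "a = b" if "(x,a)\<in>M" "(x,b)\<in>M" for x a b
  proof -
    have "(x + (-1) *\<^sub>R x, a + (-1)*b) \<in> M" by (rule Madd[OF that(1) Msc[OF that(2)]])
    then have "a - b \<le> 0" using Md[of 0 "a - b"] p0 by simp
    moreover have "(x + (-1) *\<^sub>R x, b + (-1)*a) \<in> M" by (rule Madd[OF that(2) Msc[OF that(1)]])
    then have "b - a \<le> 0" using Md[of 0 "b - a"] p0 by simp
    ultimately show ?thesis by simp
  qed
  have total: "\<exists>a. (y,a) \<in> M" for y
  proof (rule ccontr)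
    assume ny: "\<not> (\<exists>a. (y,a) \<in> M)"
    define S1 where "S1 = {b - p (x - y) | x b. (x,b) \<in> M}"
    have S1ne: "S1 \<noteq> {}" using M0 unfolding S1_def by blast
    have S1bd: "s \<le> p (x' + y) - b'" if "s \<in> S1" "(x',b') \<in> M" for s x' b'
    proof -
      obtain x b where xb: "s = b - p (x - y)" "(x,b) \<in> M" using \<open>s \<in> S1\<close> unfolding S1_def by blast
      have "b + b' \<le> p (x + x')" using Md[OF Madd[OF xb(2) that(2)]] .
      also have "\<dots> \<le> p (x - y) + p (x' + y)" using sub[of "x - y" "x' + y"] by (simp add: algebra_simps)
      finally show ?thesis using xb by simp
    qed
    define a where "a = Sup S1"
    have bdd: "bdd_above S1" using S1bd M0 by (intro bdd_aboveI) blast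
    have a1: "b - p (x - y) \<le> a" if "(x,b) \<in> M" for x b
      unfolding a_def by (rule cSup_upper[OF _ bdd]) (use that S1_def in blast)
    have a2: "a \<le> p (x' + y) - b'" if "(x',b') \<in> M" for x' b'
      unfolding a_def by (rule cSup_least[OF S1ne]) (use S1bd that in blast)
    define M' where "M' = {(x + t *\<^sub>R y, b + t * a) | x b t. (x,b) \<in> M}"
    have dom: "b + t * a \<le> p (x + t *\<^sub>R y)" if "(x,b) \<in> M" for x b t
    proof (cases "t = 0")
      case True then show ?thesis using Md that by simp
    next
      case False
      show ?thesis
      proof (cases "t > 0")
        case True
        have "((1/t) *\<^sub>R x, (1/t) * b) \<in> M" using Msc that by blast
        from a2[OF this] have "t * a \<le> t * (p ((1/t) *\<^sub>R x + y) - (1/t) * b)"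
          using True by (simp add: mult_left_mono)
        moreover have "p (t *\<^sub>R ((1/t) *\<^sub>R x + y)) = t * p ((1/t) *\<^sub>R x + y)" by (rule hom[OF True])
        moreover have "t *\<^sub>R ((1/t) *\<^sub>R x + y) = x + t *\<^sub>R y" using True by (simp add: scaleR_add_right)
        moreover have "t * ((1/t) * b) = b" using True by simp
        ultimately show ?thesis by (simp add: right_diff_distrib)
      next
        case False2: False
        define s where "s = -t"
        have s: "s > 0" using False False2 s_def by simp
        have "((1/s) *\<^sub>R x, (1/s) * b) \<in> M" using Msc that by blast
        from a1[OF this] have "s * ((1/s) * b - p ((1/s) *\<^sub>R x - y)) \<le> s * a"
          using s by (simp add: mult_left_mono)
        moreover have "s * p ((1/s) *\<^sub>R x - y) = p (s *\<^sub>R ((1/s) *\<^sub>R x - y))" using hom[OF s] by simp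
        moreover have "s *\<^sub>R ((1/s) *\<^sub>R x - y) = x + t *\<^sub>R y" using s s_def by (simp add: algebra_simps)
        ultimately show ?thesis using s s_def by (simp add: algebra_simps)
      qed
    qed
    have mm: "(x + t *\<^sub>R y, b + t * a) \<in> M'" if "(x,b) \<in> M" for x b t
      unfolding M'_def using that by blast
    have "M' \<in> A" unfolding A_def lsubG_def
    proof (intro CollectI conjI allI impI)
      show "(0,0) \<in> M'" using mm[OF M0, of 0] by simp
      show "(x0, p x0) \<in> M'" using mm[OF Mx0, of 0] by simp
      fix x a' assume "(x,a') \<in> M'"
      then show "a' \<le> p x" unfolding M'_def using dom by blast
      fix c
      obtain x1 b t where e: "x = x1 + t *\<^sub>R y" "a' = b + t * a" "(x1,b) \<in> M"
        using \<open>(x,a') \<in> M'\<close> unfolding M'_def by blast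
      have "(c *\<^sub>R x1 + (c*t) *\<^sub>R y, c * b + (c*t) * a) \<in> M'" by (rule mm[OF Msc[OF e(3)]])
      moreover have "c *\<^sub>R x = c *\<^sub>R x1 + (c*t) *\<^sub>R y" "c * a' = c * b + (c*t) * a"
        using e by (simp_all add: scaleR_add_right distrib_left)
      ultimately show "(c *\<^sub>R x, c * a') \<in> M'" by simp
    next
      fix x a' z b' assume "(x,a') \<in> M'" "(z,b') \<in> M'"
      then obtain x1 b1 t1 x2 b2 t2 where e: "x = x1 + t1 *\<^sub>R y" "a' = b1 + t1 * a" "(x1,b1) \<in> M"
         "z = x2 + t2 *\<^sub>R y" "b' = b2 + t2 * a" "(x2,b2) \<in> M"
        unfolding M'_def by blast
      have "(x1 + x2 + (t1+t2) *\<^sub>R y, b1 + b2 + (t1+t2) * a) \<in> M'" by (rule mm[OF Madd[OF e(3) e(6)]])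
      moreover have "x + z = x1 + x2 + (t1+t2) *\<^sub>R y" "a' + b' = b1 + b2 + (t1+t2) * a"
        using e by (simp_all add: algebra_simps)
      ultimately show "(x + z, a' + b') \<in> M'" by simp
    qed
    moreover have "M \<subseteq> M'" using mm[of _ _ 0] by auto
    ultimately have "M' = M" using Mmax by blast
    moreover have "(y, a) \<in> M'" using mm[OF M0, of 1] by simp
    ultimately show False using ny by blast
  qed
  define f where "f y = (SOME a. (y,a) \<in> M)" for y
  have fM: "(y, f y) \<in> M" for y unfolding f_def using total someI_ex by metis
  show ?thesis
  proof (intro exI[of _ f] conjI allI)
    fix x y show "f (x+y) = f x + f y" using uniq[OF fM Madd[OF fM fM]] .
  next
    fix c x show "f (c *\<^sub>R x) = c * f x" using uniq[OF fM Msc[OF fM]] .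
  next
    fix x show "f x \<le> p x" using Md[OF fM] .
  next
    show "f x0 = p x0" using uniq[OF fM Mx0] .
  qed
qed

lemma blinfun_from_HB:
  fixes f :: "'v::real_normed_vector \<Rightarrow> real"
  assumes add: "\<And>x y. f (x+y) = f x + f y" and sc: "\<And>c x. f (c *\<^sub>R x) = c * f x"
    and bd: "\<And>x. f x \<le> K * norm x"
  shows "bounded_linear f" and "\<And>x. \<bar>f x\<bar> \<le> K * norm x"
proof -
  have ab: "\<bar>f x\<bar> \<le> K * norm x" for x
  proof -
    have "f (-x) = - f x" using sc[of "-1" x] by simp
    then show ?thesis using bd[of x] bd[of "-x"] by simp
  qed
  show "\<And>x. \<bar>f x\<bar> \<le> K * norm x" by (rule ab)
  show "bounded_linear f"
    by (rule bounded_linear_intro[of f K]) (use add sc ab in \<open>auto simp: mult.commute\<close>)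
qed

lemma norming_functional:
  fixes x :: "'v::real_normed_vector"
  shows "\<exists>f::'v \<Rightarrow>\<^sub>L real. norm f \<le> 1 \<and> blinfun_apply f x = norm x"
proof -
  obtain f where add: "\<And>x y. f (x+y) = f x + f y" and sc: "\<And>c x. f (c *\<^sub>R x) = c * f x"
    and bd: "\<And>y. f y \<le> norm y" and fx: "f x = norm x"
  proof -
    have "\<exists>f. (\<forall>x y. f (x+y) = f x + f y) \<and> (\<forall>c x. f (c *\<^sub>R x) = c * f x) \<and> (\<forall>y. f y \<le> norm y) \<and> f x = norm x"
      by (rule HB_analytic) (auto simp: norm_triangle_ineq)
    then show ?thesis using that by blast
  qed
  have bl: "bounded_linear f" and ab: "\<And>y. \<bar>f y\<bar> \<le> 1 * norm y"
    using blinfun_from_HB[of f 1] add sc bd by auto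
  show ?thesis
    apply (rule exI[of _ "Blinfun f"])
    using bounded_linear_Blinfun_apply[OF bl] ab fx
    by (auto intro!: norm_blinfun_bound)
qed

definition gaugeW :: "'v::real_normed_vector set \<Rightarrow> 'v \<Rightarrow> real" where
  "gaugeW W x = Inf {t. 0 < t \<and> (1/t) *\<^sub>R x \<in> W}"

lemma gauge_props:
  fixes W :: "'v::real_normed_vector set"
  assumes cW: "convex W" and r: "r > 0" and bW: "ball 0 r \<subseteq> W"
  shows "\<And>x y. gaugeW W (x+y) \<le> gaugeW W x + gaugeW W y"
    and "\<And>a x. a > 0 \<Longrightarrow> gaugeW W (a *\<^sub>R x) = a * gaugeW W x"
    and "\<And>x. gaugeW W x \<le> norm x / r"
    and "\<And>w. w \<in> W \<Longrightarrow> gaugeW W w \<le> 1"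
    and "\<And>x. x \<notin> W \<Longrightarrow> 1 \<le> gaugeW W x"
proof -
  define S where "S x = {t. 0 < t \<and> (1/t) *\<^sub>R x \<in> W}" for x
  have gS: "gaugeW W x = Inf (S x)" for x unfolding gaugeW_def S_def ..
  have W0: "0 \<in> W" using bW r by auto
  have big: "t \<in> S x" if "t > norm x / r" for x t
  proof -
    have "0 \<le> norm x / r" using r by simp
    then have tp: "t > 0" using that by linarith
    have "norm ((1/t) *\<^sub>R x) = norm x / t" using tp by simp
    also have "\<dots> < r" using that tp r by (simp add: divide_less_eq mult.commute pos_divide_less_eq)
    finally show ?thesis using bW tp unfolding S_def by auto
  qed
  have ne: "S x \<noteq> {}" for x using big[of x "norm x / r + 1"] by auto
  have bb: "bdd_below (S x)" for x unfolding S_def by (rule bdd_belowI[of _ 0]) auto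
  have low: "gaugeW W x \<le> t" if "t \<in> S x" for x t unfolding gS by (rule cInf_lower[OF that bb])
  have grt: "c \<le> gaugeW W x" if "\<And>t. t \<in> S x \<Longrightarrow> c \<le> t" for x c unfolding gS by (rule cInf_greatest[OF ne that])
  have up: "t \<in> S x" if "s \<in> S x" "s \<le> t" for x s t
  proof -
    have s: "s > 0" "(1/s) *\<^sub>R x \<in> W" using that unfolding S_def by auto
    have t: "t > 0" using s that by simp
    have "(s/t) *\<^sub>R ((1/s) *\<^sub>R x) + (1 - s/t) *\<^sub>R 0 \<in> W"
      using convexD[OF cW s(2) W0, of "s/t" "1 - s/t"] s t that by simp
    then have "(1/t) *\<^sub>R x \<in> W" using s by simp
    then show ?thesis using t unfolding S_def by simp
  qed
  show "gaugeW W (x+y) \<le> gaugeW W x + gaugeW W y" for x y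
  proof -
    have key: "gaugeW W (x+y) \<le> s + t" if "s \<in> S x" "t \<in> S y" for s t
    proof -
      have s: "s > 0" "(1/s) *\<^sub>R x \<in> W" and t: "t > 0" "(1/t) *\<^sub>R y \<in> W" using that unfolding S_def by auto
      have "(s/(s+t)) *\<^sub>R ((1/s) *\<^sub>R x) + (t/(s+t)) *\<^sub>R ((1/t) *\<^sub>R y) \<in> W"
        using convexD[OF cW s(2) t(2), of "s/(s+t)" "t/(s+t)"] s t by (simp add: add_divide_distrib[symmetric])
      moreover have "(s/(s+t)) *\<^sub>R ((1/s) *\<^sub>R x) + (t/(s+t)) *\<^sub>R ((1/t) *\<^sub>R y) = (1/(s+t)) *\<^sub>R (x+y)"
        using s t by (simp add: scaleR_add_right)
      ultimately have "s + t \<in> S (x+y)" using s t unfolding S_def by simp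
      then show ?thesis by (rule low)
    qed
    have "gaugeW W (x+y) - t \<le> gaugeW W x" if "t \<in> S y" for t
      using grt[of x "gaugeW W (x+y) - t"] key[OF _ that] by force
    then have "gaugeW W (x+y) - gaugeW W x \<le> gaugeW W y"
      using grt[of y "gaugeW W (x+y) - gaugeW W x"] by force
    then show ?thesis by simp
  qed
  have homle: "gaugeW W (a *\<^sub>R x) \<le> a * gaugeW W x" if a: "a > 0" for a x
  proof -
    have "gaugeW W (a *\<^sub>R x) / a \<le> s" if "s \<in> S x" for s
    proof -
      have "a * s \<in> S (a *\<^sub>R x)" using that a unfolding S_def by auto
      from low[OF this] show ?thesis using a by (simp add: divide_le_eq mult.commute)
    qed
    then have "gaugeW W (a *\<^sub>R x) / a \<le> gaugeW W x" by (rule grt)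
    then show ?thesis using a by (simp add: divide_le_eq mult.commute)
  qed
  show "gaugeW W (a *\<^sub>R x) = a * gaugeW W x" if a: "a > 0" for a x
  proof -
    have "gaugeW W x = gaugeW W ((1/a) *\<^sub>R (a *\<^sub>R x))" using a by simp
    also have "\<dots> \<le> (1/a) * gaugeW W (a *\<^sub>R x)" by (rule homle) (use a in simp)
    finally have "a * gaugeW W x \<le> gaugeW W (a *\<^sub>R x)" using a by (simp add: field_simps)
    then show ?thesis using homle[OF a, of x] by simp
  qed
  show "gaugeW W x \<le> norm x / r" for x
    by (rule dense_ge) (use low big in blast)
  show "gaugeW W w \<le> 1" if "w \<in> W" for w using low[of 1 w] that unfolding S_def by simp
  show "1 \<le> gaugeW W x" if "x \<notin> W" for x
  proof (rule grt)
    fix t assume t: "t \<in> S x"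
    show "1 \<le> t"
    proof (rule ccontr)
      assume "\<not> 1 \<le> t"
      then have "1 \<in> S x" using up[OF t] by simp
      then show False using that unfolding S_def by simp
    qed
  qed
qed

lemma separation:
  fixes C :: "'v::real_normed_vector set"
  assumes cC: "convex C" and clC: "closed C" and z: "z \<notin> C"
  shows "\<exists>\<phi>::'v \<Rightarrow>\<^sub>L real. \<exists>\<delta>>0. \<forall>c\<in>C. blinfun_apply \<phi> c + \<delta> \<le> blinfun_apply \<phi> z"
proof (cases "C = {}")
  case True then show ?thesis by (intro exI[of _ 0] exI[of _ 1]) auto
next
  case False
  then obtain c0 where c0: "c0 \<in> C" by blast
  obtain r where r: "r > 0" "ball z r \<subseteq> - C"
    using clC z open_contains_ball[of "- C"] by auto
  define W where "W = {u + (c0 - c) | u c. norm u < r \<and> c \<in> C}"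
  have cW: "convex W" unfolding W_def
  proof (rule convexI, clarsimp)
    fix u1 c1 u2 c2 :: 'v and a b :: real
    assume h: "norm u1 < r" "c1 \<in> C" "norm u2 < r" "c2 \<in> C" "0 \<le> a" "0 \<le> b" "a + b = 1"
    have "norm (a *\<^sub>R u1 + b *\<^sub>R u2) \<le> a * norm u1 + b * norm u2"
      using h norm_triangle_ineq[of "a *\<^sub>R u1" "b *\<^sub>R u2"] by simp
    also have "\<dots> < r"
    proof (cases "a = 0")
      case True then show ?thesis using h by simp
    next
      case False
      then have "a > 0" using h by simp
      then have "a * norm u1 < a * r" using h by simp
      moreover have "b * norm u2 \<le> b * r" using h by (simp add: mult_left_mono)
      moreover have "a*r + b*r = r" using h(7) by (metis distrib_right mult_1)
      ultimately show ?thesis by linarith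
    qed
    finally have n: "norm (a *\<^sub>R u1 + b *\<^sub>R u2) < r" .
    have cc: "a *\<^sub>R c1 + b *\<^sub>R c2 \<in> C" using convexD[OF cC h(2) h(4) h(5) h(6) h(7)] .
    show "\<exists>u c. a *\<^sub>R (u1 + (c0 - c1)) + b *\<^sub>R (u2 + (c0 - c2)) = u + (c0 - c) \<and> norm u < r \<and> c \<in> C"
    proof (intro exI conjI)
      show "a *\<^sub>R (u1 + (c0 - c1)) + b *\<^sub>R (u2 + (c0 - c2)) = (a *\<^sub>R u1 + b *\<^sub>R u2) + (c0 - (a *\<^sub>R c1 + b *\<^sub>R c2))"
        using h(7) by (simp add: algebra_simps) (metis scaleR_add_left scaleR_one)
    qed (use n cc in auto)
  qed
  have bW: "ball 0 r \<subseteq> W" unfolding W_def using c0 by (force simp: dist_norm)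
  note G = gauge_props[OF cW r(1) bW]
  define x0 where "x0 = c0 - z"
  have x0W: "x0 \<notin> W"
  proof
    assume "x0 \<in> W"
    then obtain u c where "x0 = u + (c0 - c)" "norm u < r" "c \<in> C" unfolding W_def by blast
    then have "c \<in> ball z r" by (simp add: x0_def dist_norm algebra_simps)
    then show False using r \<open>c \<in> C\<close> by blast
  qed
  have x0nz: "x0 \<noteq> 0" using x0W bW r centre_in_ball[of 0 r] by blast
  obtain f where add: "\<And>x y. f (x+y) = f x + f y" and sc: "\<And>c x. f (c *\<^sub>R x) = c * f x"
    and bd: "\<And>y. f y \<le> gaugeW W y" and fx: "f x0 = gaugeW W x0"
    using HB_analytic[of "gaugeW W" x0] G(1,2) by blast
  have bd2: "f y \<le> (1/r) * norm y" for y using bd[of y] G(3)[of y] by simp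
  have bl: "bounded_linear f" using blinfun_from_HB(1)[of f "1/r"] add sc bd2 by blast
  have f1: "1 \<le> f x0" using fx G(5)[OF x0W] by simp
  define \<sigma> where "\<sigma> = r / (2 * norm x0)"
  have sp: "\<sigma> > 0" using r x0nz unfolding \<sigma>_def by simp
  have fmin: "f (a - b) = f a - f b" for a b using add[of "a - b" b] by simp
  have main: "f z + \<sigma> \<le> f c" if "c \<in> C" for c
  proof -
    define v where "v = - (\<sigma> *\<^sub>R x0)"
    have nv: "norm v < r" using x0nz r unfolding v_def \<sigma>_def by simp
    have "c0 - c - v \<in> W" unfolding W_def using nv that
      by (intro CollectI exI[of _ "-v"] exI[of _ c]) (auto simp: algebra_simps)
    then have "f (c0 - c - v) \<le> 1" using bd G(4) by (meson order_trans)
    moreover have "f (c0 - c - v) = f x0 + f z - f c + \<sigma> * f x0"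
    proof -
      have "c0 - c - v = ((x0 + z) - c) + \<sigma> *\<^sub>R x0" unfolding v_def x0_def by (simp add: algebra_simps)
      then have "f (c0 - c - v) = f ((x0 + z) - c) + f (\<sigma> *\<^sub>R x0)" using add by metis
      also have "\<dots> = f x0 + f z - f c + \<sigma> * f x0" using fmin add sc by simp
      finally show ?thesis .
    qed
    ultimately have "f z + \<sigma> * f x0 \<le> f c" using f1 by simp
    moreover have "\<sigma> \<le> \<sigma> * f x0" using f1 sp by simp
    ultimately show ?thesis by simp
  qed
  show ?thesis
  proof (intro exI[of _ "- Blinfun f"] exI[of _ \<sigma>] conjI ballI)
    show "\<sigma> > 0" by (rule sp)
    fix c assume "c \<in> C"
    then show "blinfun_apply (- Blinfun f) c + \<sigma> \<le> blinfun_apply (- Blinfun f) z"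
      using main[of c] bounded_linear_Blinfun_apply[OF bl] by (simp add: uminus_blinfun.rep_eq)
  qed
qed

lemma UBP:
  fixes F :: "nat \<Rightarrow> ('b::banach \<Rightarrow>\<^sub>L real)"
  assumes pb: "\<And>x. \<exists>M. \<forall>n. \<bar>blinfun_apply (F n) x\<bar> \<le> M"
  shows "\<exists>B. \<forall>n. norm (F n) \<le> B"
proof -
  define E where "E k = {x. \<forall>n. \<bar>blinfun_apply (F n) x\<bar> \<le> real k}" for k :: nat
  have clE: "closed (E k)" for k
  proof -
    have "E k = (\<Inter>n. {x. \<bar>blinfun_apply (F n) x\<bar> \<le> real k})" unfolding E_def by auto
    moreover have "closed {x. \<bar>blinfun_apply (F n) x\<bar> \<le> real k}" for n
      by (intro closed_Collect_le continuous_intros)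
    ultimately show ?thesis by auto
  qed
  have cov: "\<Union>(range E) = UNIV"
  proof -
    have xin: "x \<in> E (nat \<lceil>M\<rceil>)" if "\<forall>n. \<bar>blinfun_apply (F n) x\<bar> \<le> M" for x M
      unfolding E_def using that real_nat_ceiling_ge[of M] by (auto intro: order_trans)
    have "x \<in> \<Union>(range E)" for x
    proof -
      obtain M where "\<forall>n. \<bar>blinfun_apply (F n) x\<bar> \<le> M" using pb[of x] by (elim exE)
      from xin[OF this] show ?thesis by (rule UN_I[rotated]) simp
    qed
    then show ?thesis by (intro set_eqI iffI) simp_all
  qed
  have "\<exists>k. interior (E k) \<noteq> {}"
  proof (rule ccontr)
    assume "\<not> ?thesis"
    then have ie: "interior (E k) = {}" for k by (simp only: not_ex not_not)
    have "euclidean interior_of \<Union>(range E) = {}"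
    proof (rule Baire_category_alt)
      show "completely_metrizable_space (euclidean::'b topology) \<or> locally_compact_space (euclidean::'b topology) \<and> regular_space (euclidean::'b topology)"
        using completely_metrizable_space_euclidean by blast
      show "countable (range E)" by simp
      fix T assume "T \<in> range E"
      then show "closedin euclidean T \<and> euclidean interior_of T = {}" using clE ie by auto
    qed
    then show False using cov by simp
  qed
  then obtain k x0 where "x0 \<in> interior (E k)" by blast
  then obtain r where r: "r > 0" "ball x0 r \<subseteq> E k" using mem_interior by blast
  have sm: "\<bar>blinfun_apply (F n) u\<bar> \<le> 2 * real k" if "norm u < r" for n u
  proof -
    have "x0 + u \<in> E k" "x0 \<in> E k" using r that by (auto simp: dist_norm)
    then have "\<bar>blinfun_apply (F n) (x0 + u)\<bar> \<le> real k" "\<bar>blinfun_apply (F n) x0\<bar> \<le> real k"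
      unfolding E_def by auto
    moreover have "blinfun_apply (F n) u = blinfun_apply (F n) (x0 + u) - blinfun_apply (F n) x0"
      by (simp add: blinfun.add_right)
    ultimately show ?thesis by linarith
  qed
  have "norm (F n) \<le> 4 * real k / r" for n
  proof (rule norm_blinfun_bound)
    show "0 \<le> 4 * real k / r" using r by simp
    fix u
    show "norm (blinfun_apply (F n) u) \<le> 4 * real k / r * norm u"
    proof (cases "u = 0")
      case True then show ?thesis by simp
    next
      case False
      define s where "s = r / (2 * norm u)"
      have s: "s > 0" using False r s_def by simp
      have "norm (s *\<^sub>R u) < r" using False r s_def by simp
      then have "\<bar>blinfun_apply (F n) (s *\<^sub>R u)\<bar> \<le> 2 * real k" by (rule sm)
      then have "s * \<bar>blinfun_apply (F n) u\<bar> \<le> 2 * real k" using s by (simp add: blinfun.scaleR_right abs_mult)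
      then have "\<bar>blinfun_apply (F n) u\<bar> \<le> 2 * real k / s" using s by (simp add: field_simps)
      also have "2 * real k / s = 4 * real k / r * norm u" using False r unfolding s_def by (simp add: field_simps)
      finally show ?thesis by (simp only: real_norm_def)
    qed
  qed
  then have "\<forall>n. norm (F n) \<le> 4 * real k / r" by (rule allI)
  then show ?thesis by (rule exI)
qed

lemma weak_lsc:
  fixes g :: "'v::real_normed_vector \<Rightarrow> ereal"
  assumes lsc: "ereal_lsc g" and cvx: "ereal_convex g" and nm: "\<And>z. g z \<noteq> -\<infinity>"
    and wc: "\<And>\<phi>::'v \<Rightarrow>\<^sub>L real. (\<lambda>n. blinfun_apply \<phi> (zn n)) \<longlonglongrightarrow> blinfun_apply \<phi> z"
    and c: "ereal c < g z"
  shows "eventually (\<lambda>n. ereal c < g (zn n)) sequentially"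
proof -
  define C where "C = {w. g w \<le> ereal c}"
  have clC: "closed C" using lsc unfolding ereal_lsc_def C_def by blast
  have cC: "convex C" unfolding C_def
  proof (rule convexI, clarsimp)
    fix w1 w2 and u v :: real
    assume h: "g w1 \<le> ereal c" "g w2 \<le> ereal c" "0 \<le> u" "0 \<le> v" "u + v = 1"
    obtain a1 where a1: "g w1 = ereal a1" using h(1) nm[of w1] by (cases "g w1") auto
    obtain a2 where a2: "g w2 = ereal a2" using h(2) nm[of w2] by (cases "g w2") auto
    have "g ((1 - v) *\<^sub>R w1 + v *\<^sub>R w2) \<le> ereal (1 - v) * g w1 + ereal v * g w2"
      using cvx h unfolding ereal_convex_def by auto
    also have "\<dots> = ereal ((1-v) * a1 + v * a2)" using a1 a2 by simp
    also have "(1-v) * a1 + v * a2 \<le> (1-v) * c + v * c"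
      using h a1 a2 by (intro add_mono mult_left_mono) auto
    also have "(1-v) * c + v * c = c" by (simp add: algebra_simps)
    finally show "g (u *\<^sub>R w1 + v *\<^sub>R w2) \<le> ereal c" using h(5) by (simp add: eq_diff_eq[symmetric])
  qed
  have zC: "z \<notin> C" using c unfolding C_def by auto
  obtain \<phi> :: "'v \<Rightarrow>\<^sub>L real" and \<delta> where d: "\<delta> > 0" and sep: "\<And>w. w \<in> C \<Longrightarrow> blinfun_apply \<phi> w + \<delta> \<le> blinfun_apply \<phi> z"
    using separation[OF cC clC zC] by blast
  have "eventually (\<lambda>n. dist (blinfun_apply \<phi> (zn n)) (blinfun_apply \<phi> z) < \<delta>) sequentially"
    using wc[of \<phi>] d by (rule tendstoD)
  then show ?thesis
  proof (rule eventually_mono)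
    fix n assume "dist (blinfun_apply \<phi> (zn n)) (blinfun_apply \<phi> z) < \<delta>"
    then have "zn n \<notin> C" using sep[of "zn n"] by (auto simp: dist_real_def)
    then show "ereal c < g (zn n)" unfolding C_def by auto
  qed
qed

lemma TbD:
  fixes h :: "'a::real_normed_vector \<times> ('a \<Rightarrow>\<^sub>L real) \<Rightarrow> ereal"
  assumes "xs \<in> Tbreve h \<epsilon> x" "\<And>z. h z \<noteq> -\<infinity>"
  obtains r where "h (x,xs) = ereal r"
    "\<And>y ys. ereal (r + blinfun_apply xs y - 2 * blinfun_apply xs x + blinfun_apply ys x - 2 * \<epsilon>) \<le> h (y,ys)"
proof -
  have fin: "h (x,xs) < \<infinity>" and ineq: "\<And>y ys. h (y,ys) \<ge> h (x,xs) + ereal (pair_dual ((y,ys) - (x,xs)) (xs,x)) - ereal (2*\<epsilon>)"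
    using assms(1) unfolding Tbreve_def eps_subdiff_def by (auto split: if_splits)
  obtain r where r: "h (x,xs) = ereal r" using fin assms(2)[of "(x,xs)"] by (cases "h (x,xs)") auto
  show ?thesis
  proof (rule that[OF r])
    fix y ys
    have "ereal r + ereal (pair_dual ((y,ys) - (x,xs)) (xs,x)) - ereal (2*\<epsilon>) \<le> h (y,ys)" using ineq[of y ys] r by simp
    then have 1: "ereal (r + pair_dual ((y,ys) - (x,xs)) (xs,x) - 2*\<epsilon>) \<le> h (y,ys)" by simp
    have pd: "pair_dual ((y,ys) - (x,xs)) (xs,x) = blinfun_apply xs y - 2 * blinfun_apply xs x + blinfun_apply ys x"
      unfolding pair_dual_def by (simp add: blinfun.diff_right blinfun.diff_left)
    have e: "r + pair_dual ((y,ys) - (x,xs)) (xs,x) - 2*\<epsilon> = r + blinfun_apply xs y - 2 * blinfun_apply xs x + blinfun_apply ys x - 2 * \<epsilon>"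
      unfolding pd by simp
    from 1 show "ereal (r + blinfun_apply xs y - 2 * blinfun_apply xs x + blinfun_apply ys x - 2 * \<epsilon>) \<le> h (y,ys)"
      by (simp only: e)
  qed
qed

lemma TbI:
  fixes h :: "'a::real_normed_vector \<times> ('a \<Rightarrow>\<^sub>L real) \<Rightarrow> ereal"
  assumes r: "h (x,xs) = ereal r"
    and ineq: "\<And>y ys. ereal (r + blinfun_apply xs y - 2 * blinfun_apply xs x + blinfun_apply ys x - 2 * \<epsilon>) \<le> h (y,ys)"
  shows "xs \<in> Tbreve h \<epsilon> x"
proof -
  have *: "h (y,ys) \<ge> h (x,xs) + ereal (pair_dual ((y,ys) - (x,xs)) (xs,x)) - ereal (2*\<epsilon>)" for y ys
  proof -
    have pd: "pair_dual ((y,ys) - (x,xs)) (xs,x) = blinfun_apply xs y - 2 * blinfun_apply xs x + blinfun_apply ys x"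
      unfolding pair_dual_def by (simp add: blinfun.diff_right blinfun.diff_left)
    have e: "r + pair_dual ((y,ys) - (x,xs)) (xs,x) - 2*\<epsilon> = r + blinfun_apply xs y - 2 * blinfun_apply xs x + blinfun_apply ys x - 2 * \<epsilon>"
      unfolding pd by simp
    have "ereal (r + pair_dual ((y,ys) - (x,xs)) (xs,x) - 2*\<epsilon>) \<le> h (y,ys)" using ineq[of y ys] by (simp only: e)
    then show ?thesis using r by simp
  qed
  have "\<forall>w. h w \<ge> h (x,xs) + ereal (pair_dual (w - (x,xs)) (xs,x)) - ereal (2*\<epsilon>)"
  proof
    fix w :: "'a \<times> ('a \<Rightarrow>\<^sub>L real)"
    show "h w \<ge> h (x,xs) + ereal (pair_dual (w - (x,xs)) (xs,x)) - ereal (2*\<epsilon>)"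
      using *[of "fst w" "snd w"] by simp
  qed
  then show ?thesis unfolding Tbreve_def eps_subdiff_def using r by (simp only: mem_Collect_eq) simp
qed

lemma real_limit_le:
  fixes a b :: real
  assumes "\<And>t. 0 < t \<Longrightarrow> t < 1 \<Longrightarrow> a + t * b \<le> 0"
  shows "a \<le> 0"
proof (rule ccontr)
  assume a: "\<not> a \<le> 0"
  define t where "t = min (1/2) (a / (2 * (\<bar>b\<bar> + 1)))"
  have t: "0 < t" "t < 1" using a unfolding t_def by auto
  have "t * \<bar>b\<bar> \<le> a / (2 * (\<bar>b\<bar> + 1)) * \<bar>b\<bar>" unfolding t_def by (intro mult_right_mono) auto
  also have "\<dots> < a"
  proof -
    have d: "0 < 2*(\<bar>b\<bar>+1)" by simp
    have "a * \<bar>b\<bar> < a * (2*(\<bar>b\<bar>+1))" using a by (intro mult_strict_left_mono) auto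
    then have "a * \<bar>b\<bar> / (2*(\<bar>b\<bar>+1)) < a" using d by (simp add: pos_divide_less_eq)
    then show ?thesis by simp
  qed
  finally have "t * \<bar>b\<bar> < a" .
  moreover have "- (t * \<bar>b\<bar>) \<le> t * b"
  proof -
    have "t * (- \<bar>b\<bar>) \<le> t * b" using t by (intro mult_left_mono) auto
    then show ?thesis by simp
  qed
  ultimately show False using assms[OF t] by linarith
qed

lemma HT_props:
  assumes "h \<in> HT T"
  shows "\<And>z. h z \<noteq> -\<infinity>" "ereal_lsc h" "ereal_convex h"
    "\<And>x xs. h (x, xs) \<ge> ereal (blinfun_apply xs x)"
    "\<And>x xs. xs \<in> T x \<Longrightarrow> h (x, xs) = ereal (blinfun_apply xs x)"
    "\<And>z w t. 0 \<le> t \<Longrightarrow> t \<le> 1 \<Longrightarrow> h ((1 - t) *\<^sub>R z + t *\<^sub>R w) \<le> ereal (1 - t) * h z + ereal t * h w"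
  using assms unfolding HT_def ereal_convex_def by blast+

lemma fitz:
  fixes T :: "'a::real_normed_vector \<Rightarrow> ('a \<Rightarrow>\<^sub>L real) set"
  assumes hT: "h \<in> HT T" and g: "xs \<in> T x"
  shows "ereal (blinfun_apply xs y + blinfun_apply ys x - blinfun_apply xs x) \<le> h (y,ys)"
proof -
  note H = HT_props[OF hT]
  show ?thesis
  proof (cases "h (y,ys)")
    case PInf then show ?thesis by simp
  next
    case MInf then show ?thesis using H(1) by blast
  next
    case (real R)
    define a where "a = blinfun_apply xs y + blinfun_apply ys x - blinfun_apply xs x - R"
    define b where "b = blinfun_apply ys y - blinfun_apply xs y - blinfun_apply ys x + blinfun_apply xs x"
    have "a + t * b \<le> 0" if t: "0 < t" "t < 1" for t
    proof -
      define z where "z = (1 - t) *\<^sub>R (x, xs) + t *\<^sub>R (y, ys)"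
      have "h z \<le> ereal (1 - t) * h (x,xs) + ereal t * h (y,ys)"
        unfolding z_def by (rule H(6)) (use t in auto)
      also have "\<dots> = ereal ((1-t) * blinfun_apply xs x + t * R)" using H(5)[OF g] real by simp
      finally have up: "h z \<le> ereal ((1-t) * blinfun_apply xs x + t * R)" .
      have lo: "ereal (blinfun_apply (snd z) (fst z)) \<le> h z" using H(4)[where x="fst z" and xs="snd z"] by simp
      have "ereal (blinfun_apply (snd z) (fst z)) \<le> ereal ((1-t) * blinfun_apply xs x + t * R)"
        by (rule order_trans[OF lo up])
      then have ineq: "blinfun_apply (snd z) (fst z) \<le> (1-t) * blinfun_apply xs x + t * R" by simp
      have ex: "blinfun_apply (snd z) (fst z) = (1-t)*(1-t) * blinfun_apply xs x + (1-t)*t * blinfun_apply xs y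
          + t*(1-t) * blinfun_apply ys x + t*t * blinfun_apply ys y"
      proof -
        have fz: "fst z = (1-t) *\<^sub>R x + t *\<^sub>R y" "snd z = (1-t) *\<^sub>R xs + t *\<^sub>R ys" unfolding z_def by simp_all
        show ?thesis unfolding fz
          by (simp only: blinfun.add_left blinfun.add_right blinfun.scaleR_left blinfun.scaleR_right real_scaleR_def)
             (simp add: algebra_simps)
      qed
      have id: "t * (a + t * b) = blinfun_apply (snd z) (fst z) - ((1-t) * blinfun_apply xs x + t * R)"
        unfolding ex a_def b_def by (simp add: algebra_simps)
      then have "t * (a + t * b) \<le> 0" using ineq by simp
      then show ?thesis using t by (simp add: mult_le_0_iff)
    qed
    then have "a \<le> 0" by (rule real_limit_le)
    then show ?thesis using real unfolding a_def by simp
  qed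
qed

lemma graph_nonempty:
  fixes T :: "'a::real_normed_vector \<Rightarrow> ('a \<Rightarrow>\<^sub>L real) set"
  assumes "maximal_monotone T"
  obtains x0 xs0 where "xs0 \<in> T x0"
proof -
  have "\<exists>x0 xs0. xs0 \<in> T x0"
  proof (rule ccontr)
    assume "\<not> ?thesis"
    then have e: "T x = {}" for x by auto
    define S :: "'a \<Rightarrow> ('a \<Rightarrow>\<^sub>L real) set" where "S = (\<lambda>x. if x = 0 then {0} else {})"
    have "monotone_op S" unfolding monotone_op_def S_def by auto
    moreover have "\<forall>x. T x \<subseteq> S x" using e by auto
    ultimately have "S = T" using assms unfolding maximal_monotone_def by blast
    then have "T 0 = S 0" by simp
    also have "S 0 = {0}" unfolding S_def by simp
    finally show False using e[of 0] by simp
  qed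
  then show ?thesis using that by blast
qed

lemma Tb_zero:
  fixes T :: "'a::real_normed_vector \<Rightarrow> ('a \<Rightarrow>\<^sub>L real) set"
  assumes hT: "h \<in> HT T" and mm: "maximal_monotone T"
  shows "Tbreve h 0 x = T x"
proof
  note H = HT_props[OF hT]
  show "T x \<subseteq> Tbreve h 0 x"
  proof
    fix xs assume g: "xs \<in> T x"
    show "xs \<in> Tbreve h 0 x"
    proof (rule TbI)
      show "h (x, xs) = ereal (blinfun_apply xs x)" by (rule H(5)[OF g])
    next
      fix y ys
      have e: "blinfun_apply xs x + blinfun_apply xs y - 2 * blinfun_apply xs x + blinfun_apply ys x - 2 * 0
          = blinfun_apply xs y + blinfun_apply ys x - blinfun_apply xs x" by simp
      show "ereal (blinfun_apply xs x + blinfun_apply xs y - 2 * blinfun_apply xs x + blinfun_apply ys x - 2 * 0) \<le> h (y, ys)"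
        unfolding e by (rule fitz[OF hT g])
    qed
  qed
  show "Tbreve h 0 x \<subseteq> T x"
  proof
    fix xs assume xs: "xs \<in> Tbreve h 0 x"
    obtain r where r: "h (x,xs) = ereal r"
      and ineq: "\<And>y ys. ereal (r + blinfun_apply xs y - 2 * blinfun_apply xs x + blinfun_apply ys x - 2 * 0) \<le> h (y,ys)"
      using TbD[OF xs H(1)] by blast
    have rx: "blinfun_apply xs x \<le> r" using H(4)[where x=x and xs=xs] r by simp
    have mon: "0 \<le> blinfun_apply (xs - ys) (x - y)" if "ys \<in> T y" for y ys
    proof -
      have "ereal (r + blinfun_apply xs y - 2 * blinfun_apply xs x + blinfun_apply ys x - 2 * 0) \<le> ereal (blinfun_apply ys y)"
        using ineq[of y ys] H(5)[OF that] by simp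
      then have "r + blinfun_apply xs y - 2 * blinfun_apply xs x + blinfun_apply ys x \<le> blinfun_apply ys y" by simp
      then show ?thesis using rx by (simp add: blinfun.diff_left blinfun.diff_right)
    qed
    define S where "S = (\<lambda>z. if z = x then insert xs (T x) else T z)"
    have mT: "monotone_op T" using mm unfolding maximal_monotone_def by blast
    have "monotone_op S" unfolding monotone_op_def
    proof (intro allI impI)
      fix p q a b assume a: "a \<in> S p" and b: "b \<in> S q"
      have sym: "blinfun_apply (a - b) (p - q) = blinfun_apply (b - a) (q - p)"
        by (simp add: blinfun.diff_left blinfun.diff_right algebra_simps)
      have a': "a \<in> T p \<or> (p = x \<and> a = xs)" using a unfolding S_def by (cases "p = x") auto
      have b': "b \<in> T q \<or> (q = x \<and> b = xs)" using b unfolding S_def by (cases "q = x") auto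
      consider "a \<in> T p" "b \<in> T q" | "p = x" "a = xs" "b \<in> T q" | "q = x" "b = xs" "a \<in> T p" | "p = x" "q = x" "a = xs" "b = xs"
        using a' b' by blast
      then show "0 \<le> blinfun_apply (a - b) (p - q)"
      proof cases
        case 1 then show ?thesis using mT unfolding monotone_op_def by blast
      next
        case 2 then show ?thesis using mon by blast
      next
        case 3 then show ?thesis using mon[where y=p and ys=a] sym by simp
      next
        case 4 then show ?thesis by simp
      qed
    qed
    moreover have "\<forall>z. T z \<subseteq> S z" unfolding S_def by auto
    ultimately have "S = T" using mm unfolding maximal_monotone_def by blast
    then have "T x = S x" by simp
    also have "S x = insert xs (T x)" unfolding S_def by simp
    finally show "xs \<in> T x" by blast
  qed
qed

lemma Tb_convex:
  fixes T :: "'a::real_normed_vector \<Rightarrow> ('a \<Rightarrow>\<^sub>L real) set"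
  assumes hT: "h \<in> HT T"
  shows "convex (Tbreve h \<epsilon> x)"
proof (rule convexI)
  note H = HT_props[OF hT]
  fix xs1 xs2 and u v :: real
  assume m1: "xs1 \<in> Tbreve h \<epsilon> x" and m2: "xs2 \<in> Tbreve h \<epsilon> x" and uv: "0 \<le> u" "0 \<le> v" "u + v = 1"
  obtain r1 where r1: "h (x,xs1) = ereal r1"
    and i1: "\<And>y ys. ereal (r1 + blinfun_apply xs1 y - 2 * blinfun_apply xs1 x + blinfun_apply ys x - 2 * \<epsilon>) \<le> h (y,ys)"
    using TbD[OF m1 H(1)] by blast
  obtain r2 where r2: "h (x,xs2) = ereal r2"
    and i2: "\<And>y ys. ereal (r2 + blinfun_apply xs2 y - 2 * blinfun_apply xs2 x + blinfun_apply ys x - 2 * \<epsilon>) \<le> h (y,ys)"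
    using TbD[OF m2 H(1)] by blast
  define xs where "xs = u *\<^sub>R xs1 + v *\<^sub>R xs2"
  have u: "u = 1 - v" using uv by simp
  have "h ((1 - v) *\<^sub>R (x,xs1) + v *\<^sub>R (x,xs2)) \<le> ereal (1 - v) * h (x,xs1) + ereal v * h (x,xs2)"
    by (rule H(6)) (use uv in auto)
  moreover have "(1 - v) *\<^sub>R (x,xs1) + v *\<^sub>R (x,xs2) = (x, xs)" unfolding xs_def u
    by (simp add: algebra_simps)
  ultimately have "h (x,xs) \<le> ereal (u * r1 + v * r2)" using r1 r2 u by simp
  then obtain r where r: "h (x,xs) = ereal r" and rle: "r \<le> u * r1 + v * r2"
    using H(1)[of "(x,xs)"] by (cases "h (x,xs)") auto
  show "u *\<^sub>R xs1 + v *\<^sub>R xs2 \<in> Tbreve h \<epsilon> x" unfolding xs_def[symmetric]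
  proof (rule TbI)
    show "h (x, xs) = ereal r" by (rule r)
  next
    fix y ys
    show "ereal (r + blinfun_apply xs y - 2 * blinfun_apply xs x + blinfun_apply ys x - 2 * \<epsilon>) \<le> h (y, ys)"
    proof (cases "h (y,ys)")
      case PInf then show ?thesis by simp
    next
      case MInf then show ?thesis using H(1) by blast
    next
      case (real R)
      define A1 where "A1 = r1 + blinfun_apply xs1 y - 2 * blinfun_apply xs1 x + blinfun_apply ys x - 2 * \<epsilon>"
      define A2 where "A2 = r2 + blinfun_apply xs2 y - 2 * blinfun_apply xs2 x + blinfun_apply ys x - 2 * \<epsilon>"
      have a1: "A1 \<le> R" using i1[of y ys] real unfolding A1_def by simp
      have a2: "A2 \<le> R" using i2[of y ys] real unfolding A2_def by simp
      have "u * A1 + v * A2 \<le> u * R + v * R" using a1 a2 uv by (intro add_mono mult_left_mono) auto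
      also have "\<dots> = R" using uv by (simp add: distrib_right[symmetric])
      finally have c: "u * A1 + v * A2 \<le> R" .
      have "r + blinfun_apply xs y - 2 * blinfun_apply xs x + blinfun_apply ys x - 2 * \<epsilon>
           \<le> u * A1 + v * A2"
      proof -
        have "blinfun_apply xs y = u * blinfun_apply xs1 y + v * blinfun_apply xs2 y"
          "blinfun_apply xs x = u * blinfun_apply xs1 x + v * blinfun_apply xs2 x"
          unfolding xs_def by (simp_all add: blinfun.add_left blinfun.scaleR_left)
        moreover have "blinfun_apply ys x - 2 * \<epsilon> = u * (blinfun_apply ys x - 2 * \<epsilon>) + v * (blinfun_apply ys x - 2 * \<epsilon>)"
          using uv by (simp add: distrib_right[symmetric])
        ultimately show ?thesis unfolding A1_def A2_def using rle by (simp add: algebra_simps)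
      qed
      then show ?thesis using c real by simp
    qed
  qed
qed

lemma blinfun_pair_split:
  fixes \<phi> :: "('a::real_normed_vector \<times> 'b::real_normed_vector) \<Rightarrow>\<^sub>L real"
  shows "blinfun_apply \<phi> (a,b) = blinfun_apply \<phi> (a,0) + blinfun_apply \<phi> (0,b)"
proof -
  have "blinfun_apply \<phi> ((a,0) + (0,b)) = blinfun_apply \<phi> (a,0) + blinfun_apply \<phi> (0,b)" by (rule blinfun.add_right)
  then show ?thesis by simp
qed

lemma bl_left:
  fixes \<phi> :: "('a::real_normed_vector \<times> 'b::real_normed_vector) \<Rightarrow>\<^sub>L real"
  shows "bounded_linear (\<lambda>a. blinfun_apply \<phi> (a, 0))"
  by (rule bounded_linear_compose[OF blinfun.bounded_linear_right bounded_linear_Pair[OF bounded_linear_ident bounded_linear_zero]])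

lemma bl_right:
  fixes \<phi> :: "('a::real_normed_vector \<times> 'b::real_normed_vector) \<Rightarrow>\<^sub>L real"
  shows "bounded_linear (\<lambda>b. blinfun_apply \<phi> (0, b))"
  by (rule bounded_linear_compose[OF blinfun.bounded_linear_right bounded_linear_Pair[OF bounded_linear_zero bounded_linear_ident]])

lemma weak_via_blinfun:
  fixes u :: "nat \<Rightarrow> 'b::real_normed_vector" and f :: "'b \<Rightarrow> real"
  assumes "weak_conv u l" "bounded_linear f"
  shows "(\<lambda>n. f (u n)) \<longlonglongrightarrow> f l"
  using assms(1)[unfolded weak_conv_def, rule_format, of "Blinfun f"] bounded_linear_Blinfun_apply[OF assms(2)]
  by simp

lemma closure_gen:
  fixes T :: "'a::real_normed_vector \<Rightarrow> ('a \<Rightarrow>\<^sub>L real) set"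
  assumes hT: "h \<in> HT T" and g0: "xs0 \<in> T x0"
    and pw: "\<And>\<phi>::('a \<times> ('a \<Rightarrow>\<^sub>L real)) \<Rightarrow>\<^sub>L real. (\<lambda>n. blinfun_apply \<phi> (xn n, xsn n)) \<longlonglongrightarrow> blinfun_apply \<phi> (x, xs)"
    and dd: "(\<lambda>n. blinfun_apply (xsn n) (xn n)) \<longlonglongrightarrow> blinfun_apply xs x"
    and mem: "\<And>n. xsn n \<in> Tbreve h (\<epsilon>n n) (xn n)" and ep: "\<epsilon>n \<longlonglongrightarrow> \<epsilon>"
  shows "xs \<in> Tbreve h \<epsilon> x"
proof -
  note H = HT_props[OF hT]
  have c1: "(\<lambda>n. blinfun_apply (xsn n) y) \<longlonglongrightarrow> blinfun_apply xs y" for y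
  proof -
    have bl: "bounded_linear (\<lambda>p::'a \<times> ('a \<Rightarrow>\<^sub>L real). blinfun_apply (snd p) y)"
      by (rule bounded_linear_compose[OF blinfun.bounded_linear_left bounded_linear_snd])
    show ?thesis using pw[of "Blinfun (\<lambda>p. blinfun_apply (snd p) y)"] bounded_linear_Blinfun_apply[OF bl] by simp
  qed
  have c2: "(\<lambda>n. blinfun_apply ys (xn n)) \<longlonglongrightarrow> blinfun_apply ys x" for ys :: "'a \<Rightarrow>\<^sub>L real"
  proof -
    have bl: "bounded_linear (\<lambda>p::'a \<times> ('a \<Rightarrow>\<^sub>L real). blinfun_apply ys (fst p))"
      by (rule bounded_linear_compose[OF blinfun.bounded_linear_right bounded_linear_fst])
    show ?thesis using pw[of "Blinfun (\<lambda>p. blinfun_apply ys (fst p))"] bounded_linear_Blinfun_apply[OF bl] by simp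
  qed
  have "\<forall>n. \<exists>r. h (xn n, xsn n) = ereal r \<and> (\<forall>y ys. ereal (r + blinfun_apply (xsn n) y - 2 * blinfun_apply (xsn n) (xn n) + blinfun_apply ys (xn n) - 2 * \<epsilon>n n) \<le> h (y,ys))"
  proof
    fix n
    obtain r where "h (xn n, xsn n) = ereal r"
      "\<And>y ys. ereal (r + blinfun_apply (xsn n) y - 2 * blinfun_apply (xsn n) (xn n) + blinfun_apply ys (xn n) - 2 * \<epsilon>n n) \<le> h (y,ys)"
      using TbD[OF mem[of n] H(1)] by blast
    then show "\<exists>r. h (xn n, xsn n) = ereal r \<and> (\<forall>y ys. ereal (r + blinfun_apply (xsn n) y - 2 * blinfun_apply (xsn n) (xn n) + blinfun_apply ys (xn n) - 2 * \<epsilon>n n) \<le> h (y,ys))"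
      by blast
  qed
  then obtain rn where rnall: "\<forall>n. h (xn n, xsn n) = ereal (rn n) \<and> (\<forall>y ys. ereal (rn n + blinfun_apply (xsn n) y - 2 * blinfun_apply (xsn n) (xn n) + blinfun_apply ys (xn n) - 2 * \<epsilon>n n) \<le> h (y,ys))"
    by (rule choice[THEN exE]) blast
  have rn: "\<And>n. h (xn n, xsn n) = ereal (rn n)" using rnall by blast
  have irn: "\<And>n y ys. ereal (rn n + blinfun_apply (xsn n) y - 2 * blinfun_apply (xsn n) (xn n) + blinfun_apply ys (xn n) - 2 * \<epsilon>n n) \<le> h (y,ys)"
    using rnall by blast
  have bound: "h (x,xs) \<le> ereal (R - blinfun_apply xs y + 2 * blinfun_apply xs x - blinfun_apply ys x + 2 * \<epsilon>)"
    if R: "h (y,ys) = ereal R" for y ys R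
  proof (rule ccontr)
    define L where "L = R - blinfun_apply xs y + 2 * blinfun_apply xs x - blinfun_apply ys x + 2 * \<epsilon>"
    define Ln where "Ln n = R - blinfun_apply (xsn n) y + 2 * blinfun_apply (xsn n) (xn n) - blinfun_apply ys (xn n) + 2 * \<epsilon>n n" for n
    have Lt: "Ln \<longlonglongrightarrow> L" unfolding Ln_def L_def
      by (intro tendsto_intros c1 c2 dd ep)
    have rL: "rn n \<le> Ln n" for n
    proof -
      have "ereal (rn n + blinfun_apply (xsn n) y - 2 * blinfun_apply (xsn n) (xn n) + blinfun_apply ys (xn n) - 2 * \<epsilon>n n) \<le> ereal R"
        using irn[of n y ys] R by simp
      then show ?thesis unfolding Ln_def by simp
    qed
    assume "\<not> h (x,xs) \<le> ereal (R - blinfun_apply xs y + 2 * blinfun_apply xs x - blinfun_apply ys x + 2 * \<epsilon>)"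
    then have gt: "ereal L < h (x,xs)" unfolding L_def by simp
    obtain c where c: "L < c" "ereal c < h (x,xs)"
    proof (cases "h (x,xs)")
      case (real q)
      then show ?thesis using that[of "(L + q)/2"] gt by simp
    next
      case PInf then show ?thesis using that[of "L + 1"] by simp
    next
      case MInf then show ?thesis using H(1) by blast
    qed
    have e1: "eventually (\<lambda>n. ereal c < h (xn n, xsn n)) sequentially"
      by (rule weak_lsc[OF H(2) H(3) H(1) pw c(2)])
    have e2: "eventually (\<lambda>n. Ln n < c) sequentially"
      by (rule order_tendstoD(2)[OF Lt c(1)])
    have "eventually (\<lambda>n. False) sequentially"
    proof (rule eventually_mono[OF eventually_conj[OF e1 e2]])
      fix n assume "ereal c < h (xn n, xsn n) \<and> Ln n < c"
      then show False using rn[of n] rL[of n] by simp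
    qed
    then show False by simp
  qed
  have "h (x,xs) < \<infinity>"
  proof -
    have "h (x,xs) \<le> ereal (blinfun_apply xs0 x0 - blinfun_apply xs x0 + 2 * blinfun_apply xs x - blinfun_apply xs0 x + 2 * \<epsilon>)"
      by (rule bound) (rule H(5)[OF g0])
    moreover have "ereal (blinfun_apply xs0 x0 - blinfun_apply xs x0 + 2 * blinfun_apply xs x - blinfun_apply xs0 x + 2 * \<epsilon>) < \<infinity>" by simp
    ultimately show ?thesis by (rule le_less_trans)
  qed
  then obtain r where r: "h (x,xs) = ereal r" using H(1)[of "(x,xs)"] by (cases "h (x,xs)") auto
  show ?thesis
  proof (rule TbI)
    show "h (x,xs) = ereal r" by (rule r)
  next
    fix y ys
    show "ereal (r + blinfun_apply xs y - 2 * blinfun_apply xs x + blinfun_apply ys x - 2 * \<epsilon>) \<le> h (y, ys)"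
    proof (cases "h (y,ys)")
      case PInf then show ?thesis by simp
    next
      case MInf then show ?thesis using H(1) by blast
    next
      case (real R)
      have "ereal r \<le> ereal (R - blinfun_apply xs y + 2 * blinfun_apply xs x - blinfun_apply ys x + 2 * \<epsilon>)"
        using bound[OF real] r by simp
      then show ?thesis using real by simp
    qed
  qed
qed

lemma weak_of_strong:
  fixes s :: "nat \<Rightarrow> 'b::real_normed_vector"
  assumes "s \<longlonglongrightarrow> l"
  shows "weak_conv s l"
  unfolding weak_conv_def
  using bounded_linear.tendsto[OF blinfun.bounded_linear_right assms] by blast

lemma conv_bounded:
  fixes u :: "nat \<Rightarrow> real"
  assumes "u \<longlonglongrightarrow> a"
  shows "\<exists>M. \<forall>n. \<bar>u n\<bar> \<le> M"
proof -
  have "Bseq u" using assms by (intro convergent_imp_Bseq convergentI)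
  then show ?thesis unfolding Bseq_def by auto
qed

lemma dd_strong_weak:
  fixes xn :: "nat \<Rightarrow> 'a::banach" and xsn :: "nat \<Rightarrow> ('a \<Rightarrow>\<^sub>L real)"
  assumes xc: "xn \<longlonglongrightarrow> x" and wc: "weak_conv xsn xs"
  shows "(\<lambda>n. blinfun_apply (xsn n) (xn n)) \<longlonglongrightarrow> blinfun_apply xs x"
proof -
  have pt: "(\<lambda>n. blinfun_apply (xsn n) y) \<longlonglongrightarrow> blinfun_apply xs y" for y
    by (rule weak_via_blinfun[OF wc blinfun.bounded_linear_left])
  obtain B where B: "\<And>n. norm (xsn n) \<le> B"
    using UBP[of xsn] conv_bounded[OF pt] by blast
  have z: "(\<lambda>n. blinfun_apply (xsn n) (xn n - x)) \<longlonglongrightarrow> 0"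
  proof (rule Lim_null_comparison)
    show "eventually (\<lambda>n. norm (blinfun_apply (xsn n) (xn n - x)) \<le> B * norm (xn n - x)) sequentially"
    proof (rule always_eventually, rule allI)
      fix n
      have "norm (blinfun_apply (xsn n) (xn n - x)) \<le> norm (xsn n) * norm (xn n - x)" by (rule norm_blinfun)
      also have "\<dots> \<le> B * norm (xn n - x)" using B[of n] by (intro mult_right_mono) auto
      finally show "norm (blinfun_apply (xsn n) (xn n - x)) \<le> B * norm (xn n - x)" .
    qed
    have "(\<lambda>n. B * norm (xn n - x)) \<longlonglongrightarrow> B * 0"
      by (intro tendsto_mult tendsto_const tendsto_norm_zero LIM_zero xc)
    then show "(\<lambda>n. B * norm (xn n - x)) \<longlonglongrightarrow> 0" by simp
  qed
  have "(\<lambda>n. blinfun_apply (xsn n) (xn n - x) + blinfun_apply (xsn n) x) \<longlonglongrightarrow> 0 + blinfun_apply xs x"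
    by (rule tendsto_add[OF z pt])
  then show ?thesis by (simp add: blinfun.diff_right)
qed

lemma dd_weak_strong:
  fixes xn :: "nat \<Rightarrow> 'a::banach" and xsn :: "nat \<Rightarrow> ('a \<Rightarrow>\<^sub>L real)"
  assumes wc: "weak_conv xn x" and sc: "xsn \<longlonglongrightarrow> xs"
  shows "(\<lambda>n. blinfun_apply (xsn n) (xn n)) \<longlonglongrightarrow> blinfun_apply xs x"
proof -
  define F where "F n = Blinfun (\<lambda>f::'a \<Rightarrow>\<^sub>L real. blinfun_apply f (xn n))" for n
  have Fa: "blinfun_apply (F n) f = blinfun_apply f (xn n)" for n f
  proof -
    have bl: "bounded_linear (\<lambda>f::'a \<Rightarrow>\<^sub>L real. blinfun_apply f (xn n))" by (rule blinfun.bounded_linear_left)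
    show ?thesis unfolding F_def using bounded_linear_Blinfun_apply[OF bl] by simp
  qed
  have pt: "(\<lambda>n. blinfun_apply f (xn n)) \<longlonglongrightarrow> blinfun_apply f x" for f :: "'a \<Rightarrow>\<^sub>L real"
    using wc unfolding weak_conv_def by blast
  obtain B where B: "\<And>n. norm (F n) \<le> B"
    using UBP[of F] conv_bounded[OF pt] unfolding Fa by blast
  have nb: "norm (xn n) \<le> B" for n
  proof -
    obtain f :: "'a \<Rightarrow>\<^sub>L real" where f: "norm f \<le> 1" "blinfun_apply f (xn n) = norm (xn n)"
      using norming_functional by blast
    have "norm (xn n) = norm (blinfun_apply (F n) f)" using f Fa by simp
    also have "\<dots> \<le> norm (F n) * norm f" by (rule norm_blinfun)
    also have "\<dots> \<le> norm (F n) * 1" using f by (intro mult_left_mono) auto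
    also have "\<dots> \<le> B" using B[of n] by simp
    finally show ?thesis .
  qed
  have z: "(\<lambda>n. blinfun_apply (xsn n - xs) (xn n)) \<longlonglongrightarrow> 0"
  proof (rule Lim_null_comparison)
    show "eventually (\<lambda>n. norm (blinfun_apply (xsn n - xs) (xn n)) \<le> norm (xsn n - xs) * B) sequentially"
    proof (rule always_eventually, rule allI)
      fix n
      have "norm (blinfun_apply (xsn n - xs) (xn n)) \<le> norm (xsn n - xs) * norm (xn n)" by (rule norm_blinfun)
      also have "\<dots> \<le> norm (xsn n - xs) * B" using nb[of n] by (intro mult_left_mono) auto
      finally show "norm (blinfun_apply (xsn n - xs) (xn n)) \<le> norm (xsn n - xs) * B" .
    qed
    have "(\<lambda>n. norm (xsn n - xs) * B) \<longlonglongrightarrow> 0 * B"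
      by (intro tendsto_mult tendsto_const tendsto_norm_zero LIM_zero sc)
    then show "(\<lambda>n. norm (xsn n - xs) * B) \<longlonglongrightarrow> 0" by simp
  qed
  have "(\<lambda>n. blinfun_apply (xsn n - xs) (xn n) + blinfun_apply xs (xn n)) \<longlonglongrightarrow> 0 + blinfun_apply xs x"
    by (rule tendsto_add[OF z pt])
  then show ?thesis by (simp add: blinfun.diff_left)
qed

lemma pw_gen:
  fixes u :: "nat \<Rightarrow> 'a::real_normed_vector" and v :: "nat \<Rightarrow> 'b::real_normed_vector"
    and \<phi> :: "('a \<times> 'b) \<Rightarrow>\<^sub>L real"
  assumes "weak_conv u a" "weak_conv v b"
  shows "(\<lambda>n. blinfun_apply \<phi> (u n, v n)) \<longlonglongrightarrow> blinfun_apply \<phi> (a, b)"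
proof -
  have "(\<lambda>n. blinfun_apply \<phi> (u n, 0) + blinfun_apply \<phi> (0, v n)) \<longlonglongrightarrow> blinfun_apply \<phi> (a, 0) + blinfun_apply \<phi> (0, b)"
    by (rule tendsto_add[OF weak_via_blinfun[OF assms(1) bl_left] weak_via_blinfun[OF assms(2) bl_right]])
  then show ?thesis by (simp add: blinfun_pair_split[symmetric])
qed

theorem corollary3p2:
  fixes T :: "'a::banach \<Rightarrow> ('a \<Rightarrow>\<^sub>L real) set"
    and h :: "'a \<times> ('a \<Rightarrow>\<^sub>L real) \<Rightarrow> ereal"
  assumes "reflexive_space TYPE('a)"
    and "maximal_monotone T"
    and "h \<in> HT T"
  shows "(\<forall>x\<in>dom_op T. \<forall>\<epsilon>\<ge>0. convex (Tbreve h \<epsilon> x))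
    \<and> (\<forall>xn x xsn xs \<epsilon>n \<epsilon>. xn \<longlonglongrightarrow> x \<longrightarrow> weak_conv xsn xs \<longrightarrow>
          (\<forall>n. xsn n \<in> Tbreve h (\<epsilon>n n) (xn n)) \<longrightarrow> \<epsilon>n \<longlonglongrightarrow> \<epsilon> \<longrightarrow> \<epsilon> \<ge> 0 \<longrightarrow>
          xs \<in> Tbreve h \<epsilon> x)
    \<and> (\<forall>xn x xsn xs \<epsilon>n \<epsilon>. weak_conv xn x \<longrightarrow> xsn \<longlonglongrightarrow> xs \<longrightarrow>
          (\<forall>n. xsn n \<in> Tbreve h (\<epsilon>n n) (xn n)) \<longrightarrow> \<epsilon>n \<longlonglongrightarrow> \<epsilon> \<longrightarrow> \<epsilon> \<ge> 0 \<longrightarrow>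
          xs \<in> Tbreve h \<epsilon> x)
    \<and> (\<forall>x. \<forall>\<epsilon>\<ge>0. weakly_closed (Tbreve h \<epsilon> x))
    \<and> (\<forall>x. Tbreve h 0 x = T x)"
proof -
  note hT = assms(3) and mm = assms(2)
  obtain x0 xs0 where g0: "xs0 \<in> T x0" using graph_nonempty[OF mm] by blast
  have P2: "xs \<in> Tbreve h \<epsilon> x" if "xn \<longlonglongrightarrow> x" "weak_conv xsn xs" "\<forall>n. xsn n \<in> Tbreve h (\<epsilon>n n) (xn n)" "\<epsilon>n \<longlonglongrightarrow> \<epsilon>"
    for xn :: "nat \<Rightarrow> 'a" and x xsn xs \<epsilon>n \<epsilon>
    using closure_gen[OF hT g0 pw_gen[OF weak_of_strong[OF that(1)] that(2)] dd_strong_weak[OF that(1,2)] _ that(4)] that(3)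
    by blast
  have P3: "xs \<in> Tbreve h \<epsilon> x" if "weak_conv xn x" "xsn \<longlonglongrightarrow> xs" "\<forall>n. xsn n \<in> Tbreve h (\<epsilon>n n) (xn n)" "\<epsilon>n \<longlonglongrightarrow> \<epsilon>"
    for xn :: "nat \<Rightarrow> 'a" and x xsn xs \<epsilon>n \<epsilon>
    using closure_gen[OF hT g0 pw_gen[OF that(1) weak_of_strong[OF that(2)]] dd_weak_strong[OF that(1,2)] _ that(4)] that(3)
    by blast
  have P4: "weakly_closed (Tbreve h \<epsilon> x)" if "\<epsilon> \<ge> 0" for x \<epsilon>
  proof -
    have cl: "closed (Tbreve h \<epsilon> x)" unfolding closed_sequential_limits
    proof (intro allI impI, elim conjE)
      fix s l assume sm: "\<forall>n. s n \<in> Tbreve h \<epsilon> x" and sl: "s \<longlonglongrightarrow> l"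
      show "l \<in> Tbreve h \<epsilon> x"
        by (rule P2[OF tendsto_const weak_of_strong[OF sl] _ tendsto_const]) (use sm in simp)
    qed
    have cv: "convex (Tbreve h \<epsilon> x)" by (rule Tb_convex[OF hT])
    show ?thesis unfolding weakly_closed_def
    proof (intro allI impI)
      fix y assume "y \<notin> Tbreve h \<epsilon> x"
      then obtain \<phi> :: "('a \<Rightarrow>\<^sub>L real) \<Rightarrow>\<^sub>L real" and \<delta> where d: "\<delta> > 0"
        and sep: "\<And>c. c \<in> Tbreve h \<epsilon> x \<Longrightarrow> blinfun_apply \<phi> c + \<delta> \<le> blinfun_apply \<phi> y"
        using separation[OF cv cl] by blast
      show "\<exists>F::(('a \<Rightarrow>\<^sub>L real) \<Rightarrow>\<^sub>L real) set. finite F \<and> (\<exists>e::real>0. \<forall>w. (\<forall>f\<in>F. \<bar>blinfun_apply f w - blinfun_apply f y\<bar> < e) \<longrightarrow> w \<notin> Tbreve h \<epsilon> x)"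
      proof -
      have W: "\<forall>w. (\<forall>f\<in>{\<phi>}. \<bar>blinfun_apply f w - blinfun_apply f y\<bar> < \<delta>) \<longrightarrow> w \<notin> Tbreve h \<epsilon> x"
      proof (intro allI impI)
        fix w assume "\<forall>f\<in>{\<phi>}. \<bar>blinfun_apply f w - blinfun_apply f y\<bar> < \<delta>"
        then have "\<bar>blinfun_apply \<phi> w - blinfun_apply \<phi> y\<bar> < \<delta>" by simp
        then have lt: "blinfun_apply \<phi> y - blinfun_apply \<phi> w < \<delta>" by (simp add: abs_less_iff)
        show "w \<notin> Tbreve h \<epsilon> x"
        proof
          assume "w \<in> Tbreve h \<epsilon> x"
          from sep[OF this] lt show False by linarith
        qed
      qed
      show ?thesis
        apply (rule exI[of _ "{\<phi>}"])
        apply (rule conjI)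
         apply simp
        apply (rule exI[of _ \<delta>])
        using d W by simp
      qed
    qed
  qed
  show ?thesis
  proof (intro conjI ballI allI impI)
    fix x \<epsilon> show "convex (Tbreve h \<epsilon> x)" by (rule Tb_convex[OF hT])
  next
    fix xn x xsn xs \<epsilon>n \<epsilon>
    assume "xn \<longlonglongrightarrow> x" "weak_conv xsn xs" "\<forall>n. xsn n \<in> Tbreve h (\<epsilon>n n) (xn n)" "\<epsilon>n \<longlonglongrightarrow> \<epsilon>"
    then show "xs \<in> Tbreve h \<epsilon> x" by (rule P2)
  next
    fix xn x xsn xs \<epsilon>n \<epsilon>
    assume "weak_conv xn x" "xsn \<longlonglongrightarrow> xs" "\<forall>n. xsn n \<in> Tbreve h (\<epsilon>n n) (xn n)" "\<epsilon>n \<longlonglongrightarrow> \<epsilon>"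
    then show "xs \<in> Tbreve h \<epsilon> x" by (rule P3)
  next
    fix x and \<epsilon> :: real assume "0 \<le> \<epsilon>" then show "weakly_closed (Tbreve h \<epsilon> x)" by (rule P4)
  next
    fix x show "Tbreve h 0 x = T x" by (rule Tb_zero[OF hT mm])
  qed
qed

end
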